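(* Let $n$ be the number of workers, $q\ge n$ odd, $\theta=2\pi/q$, and positive integers $k_A,k_B$ with $k_Ak_B<n$. Let $\mathbf{R}_\theta = \begin{bmatrix}\cos\theta&-\sin\theta\\ \sin\theta&\cos\theta\end{bmatrix}$, and let $\mathbf{G}^A$ ($2k_A\times 2n$) and $\mathbf{G}^B$ ($2k_B\times 2n$) have $(i,j)$-th $2\times2$ blocks $\mathbf{G}^A_{i,j}=\mathbf{R}_\theta^{ji}$ and $\mathbf{G}^B_{i,j}=\mathbf{R}_\theta^{(jk_A)i}$. Split $\mathbf{A}\in\mathbb{R}^{t\times r}$ into $2k_A$ block-columns $\mathbf{A}_{\langle\alpha,\beta\rangle}$ and $\mathbf{B}\in\mathbb{R}^{t\times w}$ into $2k_B$ block-columns $\mathbf{B}_{\langle\alpha,\beta\rangle}$ ($\beta\in\{0,1\}$); worker $l$ stores $\hat{\mathbf{A}}_{\langle l,j\rangle}=\sum_{\alpha,\beta}\mathbf{G}^A(2\alpha+\beta,2l+j)\mathbf{A}_{\langle\alpha,\beta\rangle}$ and $\hat{\mathbf{B}}_{\langle l,j\rangle}=\sum_{\alpha,\beta}\mathbf{G}^B(2\alpha+\beta,2l+j)\mathbf{B}_{\langle\alpha,\beta\rangle}$ for $j\in\{0,1\}$ and returns $\hat{\mathbf{A}}_{\langle l,k_1\rangle}^T\hat{\mathbf{B}}_{\langle l,k_2\rangle}$ for all $k_1,k_2\in\{0,1\}$. Let $\tau=k_Ak_B$. Then the threshold of the scheme is $k_Ak_B$: for any distinct $i_0,\dots,i_{\tau-1}\in\{0,\dots,n-1\}$,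 the $4\tau\times4\tau$ recovery matrix $\tilde{\mathbf{G}}=[\mathbf{G}^A_{i_0}\otimes\mathbf{G}^B_{i_0}\,|\,\cdots\,|\,\mathbf{G}^A_{i_{\tau-1}}\otimes\mathbf{G}^B_{i_{\tau-1}}]$ is nonsingular (where $\mathbf{G}^A_l$, $\mathbf{G}^B_l$ denote the $l$-th block-columns, of width 2), and its worst-case condition number is bounded by $O(q^{\,q-k_Ak_B+c_1})$, $c_1=5.5$.
   Context: $\otimes$ is the Kronecker product. The worker's outputs satisfy $\hat{\mathbf{A}}_{\langle l,k_1\rangle}^T\hat{\mathbf{B}}_{\langle l,k_2\rangle}=\mathbf{Z}\cdot(\mathbf{G}^A(:,2l+k_1)\otimes\mathbf{G}^B(:,2l+k_2))$, where $\mathbf{Z}$ is the $1\times 4k_Ak_B$ block vector of all products $\mathbf{A}_{\langle a,\beta_1\rangle}^T\mathbf{B}_{\langle b,\beta_2\rangle}$, so decoding amounts to solving systems with matrix $\tilde{\mathbf{G}}$. $\kappa(\mathbf{M})=\|\mathbf{M}\|\|\mathbf{M}^{-1}\|$ with $\|\cdot\|$ the largest singular value. *)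

theory Defs
  imports Complex_Main "Jordan_Normal_Form.Matrix" "Jordan_Normal_Form.Char_Poly"
begin

definition rot :: "real \<Rightarrow> real mat" where
  "rot \<theta> = mat 2 2 (\<lambda>(i,j). if i = 0 \<and> j = 0 then cos \<theta> else if i = 0 \<and> j = 1 then - sin \<theta>
                            else if i = 1 \<and> j = 0 then sin \<theta> else cos \<theta>)"

definition GA :: "real \<Rightarrow> nat \<Rightarrow> nat \<Rightarrow> real mat" where
  "GA \<theta> kA n = mat (2*kA) (2*n)
     (\<lambda>(r,c). (rot \<theta> ^\<^sub>m ((c div 2) * (r div 2))) $$ (r mod 2, c mod 2))"

definition GB :: "real \<Rightarrow> nat \<Rightarrow> nat \<Rightarrow> nat \<Rightarrow> real mat" where
  "GB \<theta> kA kB n = mat (2*kB) (2*n)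
     (\<lambda>(r,c). (rot \<theta> ^\<^sub>m (((c div 2) * kA) * (r div 2))) $$ (r mod 2, c mod 2))"

definition block_col :: "real mat \<Rightarrow> nat \<Rightarrow> real mat" where
  "block_col G l = mat (dim_row G) 2 (\<lambda>(r,c). G $$ (r, 2*l + c))"

definition kron :: "real mat \<Rightarrow> real mat \<Rightarrow> real mat" where
  "kron A B = mat (dim_row A * dim_row B) (dim_col A * dim_col B)
     (\<lambda>(i,j). A $$ (i div dim_row B, j div dim_col B) * B $$ (i mod dim_row B, j mod dim_col B))"

definition recovery_mat :: "real \<Rightarrow> nat \<Rightarrow> nat \<Rightarrow> nat \<Rightarrow> nat list \<Rightarrow> real mat" where
  "recovery_mat \<theta> kA kB n idx = mat (4*kA*kB) (4 * length idx)
     (\<lambda>(r,c). kron (block_col (GA \<theta> kA n) (idx ! (c div 4)))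
                   (block_col (GB \<theta> kA kB n) (idx ! (c div 4))) $$ (r, c mod 4))"

definition spec_norm :: "real mat \<Rightarrow> real" where
  "spec_norm M = sqrt (Max {e. eigenvalue (transpose_mat M * M) e})"

definition inv_mat :: "real mat \<Rightarrow> real mat" where
  "inv_mat M = (THE B. B \<in> carrier_mat (dim_row M) (dim_row M) \<and> inverts_mat M B \<and> inverts_mat B M)"

definition cond_num :: "real mat \<Rightarrow> real" where
  "cond_num M = spec_norm M * spec_norm (inv_mat M)"

end

theory Submission
  imports Defs
begin


lemma monic_prod_roots:
  fixes p :: "complex poly"
  assumes "finite S" "card S = degree p" "lead_coeff p = 1" "\<forall>s\<in>S. poly p s = 0"
  shows "p = (\<Prod>s\<in>S. [:-s,1:])"
  using assms
proof (induction S arbitrary: p rule: finite_induct)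
  case empty
  then have "degree p = 0" by simp
  then have "p = [:coeff p 0:]" by (metis degree_0_id)
  with empty show ?case by simp
next
  case (insert a F)
  then have "poly p a = 0" by simp
  then obtain r where r: "p = [:-a,1:] * r" by (metis dvdE poly_eq_0_iff_dvd)
  with insert have r0: "r \<noteq> 0" by auto
  have "degree p = degree ([:-a,1:]::complex poly) + degree r"
    unfolding r by (rule degree_mult_eq) (auto simp: r0)
  then have deg: "degree p = Suc (degree r)" by simp
  have "lead_coeff p = lead_coeff ([:-a,1:]::complex poly) * lead_coeff r"
    unfolding r by (rule lead_coeff_mult)
  then have lc: "lead_coeff r = 1" using insert(5) by simp
  have "\<forall>s\<in>F. poly r s = 0"
  proof
    fix s assume s: "s \<in> F"
    then have "s \<noteq> a" using insert(2) by auto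
    moreover have "poly p s = 0" using insert(6) s by auto
    ultimately show "poly r s = 0" using r by simp
  qed
  moreover have "card F = degree r" using insert(1,2,4) deg by simp
  ultimately have "r = (\<Prod>s\<in>F. [:-s,1:])" using insert lc by blast
  then show ?case using r insert(1,2) by simp
qed

definition om :: "nat \<Rightarrow> nat \<Rightarrow> complex" where
  "om q j = cis (2 * pi * real j / real q)"

lemma om_pow_q: "q > 0 \<Longrightarrow> om q j ^ q = 1"
proof -
  assume q: "q > 0"
  have "om q j ^ q = cis (2 * pi) ^ j" unfolding om_def using q by (simp add: DeMoivre mult_ac)
  also have "cis (2 * pi) = 1" by (simp add: complex_eq_iff)
  finally show ?thesis by simp
qed

lemma om_inj: "q > 0 \<Longrightarrow> inj_on (om q) {..<q}"
  using bij_betw_roots_unity[of q] unfolding bij_betw_def om_def by blast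

lemma norm_om [simp]: "norm (om q j) = 1"
  unfolding om_def by simp

definition Gp :: "complex \<Rightarrow> nat \<Rightarrow> complex poly" where
  "Gp a q = (\<Sum>k<q. monom (a ^ (q - 1 - k)) k)"

lemma coeff_Gp: "coeff (Gp a q) k = (if k < q then a ^ (q - 1 - k) else 0)"
  unfolding Gp_def by (simp add: coeff_sum coeff_monom)

lemma poly_Gp: "poly (Gp a q) z = (\<Sum>k<q. a ^ (q - 1 - k) * z ^ k)"
  unfolding Gp_def by (simp add: poly_sum poly_monom)

lemma degree_Gp: assumes "q > 0" "a \<noteq> 0" shows "degree (Gp a q) = q - 1"
proof (rule antisym)
  show "degree (Gp a q) \<le> q - 1" by (rule degree_le) (auto simp: coeff_Gp)
  show "q - 1 \<le> degree (Gp a q)" by (rule le_degree) (use assms in \<open>auto simp: coeff_Gp\<close>)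
qed

lemma lead_Gp: assumes "q > 0" "a \<noteq> 0" shows "lead_coeff (Gp a q) = 1"
  using assms by (simp add: degree_Gp coeff_Gp)

lemma poly_Gp_mult: "poly (Gp a q) z * (z - a) = z ^ q - a ^ q"
proof (cases q)
  case 0 then show ?thesis by (simp add: poly_Gp)
next
  case (Suc n)
  have "z ^ Suc n - a ^ Suc n = (z - a) * (\<Sum>p<Suc n. z ^ p * a ^ (n - p))"
    by (rule diff_power_eq_sum)
  then show ?thesis unfolding poly_Gp Suc by (simp add: mult_ac)
qed

lemma Gp_prod:
  assumes q: "q > 0" and l: "l < q"
  shows "Gp (om q l) q = (\<Prod>j\<in>{..<q} - {l}. [:- om q j, 1:])"
proof -
  let ?S = "om q ` ({..<q} - {l})"
  have inj: "inj_on (om q) ({..<q} - {l})" using om_inj[OF q] by (rule inj_on_subset) auto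
  have a0: "om q l \<noteq> 0" by (metis norm_om norm_zero zero_neq_one)
  have "Gp (om q l) q = (\<Prod>s\<in>?S. [:-s,1:])"
  proof (rule monic_prod_roots)
    show "finite ?S" by simp
    show "card ?S = degree (Gp (om q l) q)"
      using card_image[OF inj] l by (simp add: degree_Gp[OF q a0])
    show "lead_coeff (Gp (om q l) q) = 1" by (rule lead_Gp[OF q a0])
    show "\<forall>s\<in>?S. poly (Gp (om q l) q) s = 0"
    proof
      fix s assume "s \<in> ?S"
      then obtain j where j: "j < q" "j \<noteq> l" "s = om q j" by auto
      have ne: "s \<noteq> om q l" using j om_inj[OF q] l unfolding inj_on_def by auto
      have "poly (Gp (om q l) q) s * (s - om q l) = 0"
        unfolding poly_Gp_mult using j om_pow_q[OF q] by simp
      then show "poly (Gp (om q l) q) s = 0" using ne by simp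
    qed
  qed
  also have "\<dots> = (\<Prod>j\<in>{..<q} - {l}. [:- om q j, 1:])"
    by (rule prod.reindex[OF inj, unfolded comp_def])
  finally show ?thesis .
qed

lemma coeff_step:
  fixes P :: "complex poly"
  shows "coeff P k = coeff (P * [:-c,1:]) (Suc k) + c * coeff P (Suc k)"
  by simp

lemma coeff_div_bound_step:
  fixes P :: "complex poly"
  assumes P0: "P \<noteq> 0" and nc: "norm c = 1"
    and IH: "\<forall>k\<le>degree (P * [:-c,1:]). norm (coeff (P * [:-c,1:]) k) \<le> real ((degree (P * [:-c,1:]) - k + e) choose e)"
  shows "\<forall>k\<le>degree P. norm (coeff P k) \<le> real ((degree P - k + Suc e) choose Suc e)"
proof -
  let ?P' = "P * [:-c,1:]"
  let ?D = "degree P"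
  have "degree ?P' = degree P + degree ([:-c,1:] :: complex poly)"
    by (rule degree_mult_eq) (auto simp: P0)
  then have dP': "degree ?P' = Suc ?D" by simp
  have main: "\<forall>k. ?D - k = j \<longrightarrow> k \<le> ?D \<longrightarrow> norm (coeff P k) \<le> real ((?D - k + Suc e) choose Suc e)" for j
  proof (induction j)
    case 0
    show ?case
    proof (intro allI impI)
      fix k assume "?D - k = 0" "k \<le> ?D"
      then have k: "k = ?D" by simp
      have "coeff P (Suc k) = 0" using k by (simp add: coeff_eq_0)
      then have "coeff P k = coeff ?P' (Suc k)" using coeff_step[of P k c] by simp
      also have "norm \<dots> \<le> real ((degree ?P' - Suc k + e) choose e)"
        by (rule IH[rule_format]) (use k in \<open>unfold dP', simp\<close>)
      also have "degree ?P' - Suc k + e = e" using dP' k by simp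
      finally show "norm (coeff P k) \<le> real ((?D - k + Suc e) choose Suc e)" using k dP' by simp
    qed
  next
    case (Suc j)
    show ?case
    proof (intro allI impI)
      fix k assume a: "?D - k = Suc j" "k \<le> ?D"
      then have k: "Suc k \<le> ?D" by simp
      have "norm (coeff P k) \<le> norm (coeff ?P' (Suc k)) + norm (c * coeff P (Suc k))"
        using coeff_step[of P k c] norm_triangle_ineq by metis
      also have "norm (c * coeff P (Suc k)) = norm (coeff P (Suc k))" by (simp add: norm_mult nc)
      also have "norm (coeff ?P' (Suc k)) \<le> real ((degree ?P' - Suc k + e) choose e)"
        by (rule IH[rule_format]) (use k in \<open>unfold dP', simp\<close>)
      also have "norm (coeff P (Suc k)) \<le> real ((?D - Suc k + Suc e) choose Suc e)"
      proof -
        have j: "?D - Suc k = j" using a by simp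
        have "?D - Suc k + Suc e = Suc (j + e)" using j by simp
        then show ?thesis using Suc.IH[rule_format, OF j] k by (simp del: binomial_Suc_Suc)
      qed
      also have "real ((degree ?P' - Suc k + e) choose e) + real ((?D - Suc k + Suc e) choose Suc e)
          = real ((?D - k + Suc e) choose Suc e)"
      proof -
        have e1: "degree ?P' - Suc k + e = ?D - k + e" using dP' k by simp
        have e2: "?D - Suc k + Suc e = ?D - k + e" using k by simp
        have e3: "?D - k + Suc e = Suc (?D - k + e)" using k by simp
        show ?thesis unfolding e1 e2 e3 binomial_Suc_Suc by simp
      qed
      finally show "norm (coeff P k) \<le> real ((?D - k + Suc e) choose Suc e)" by simp
    qed
  qed
  show ?thesis using main by blast
qed

lemma coeff_div_bound:
  fixes P G :: "complex poly" and r :: "'b \<Rightarrow> complex"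
  assumes "finite U"
  shows "P * (\<Prod>j\<in>U. [:-r j,1:]) = G \<Longrightarrow> G \<noteq> 0 \<Longrightarrow> (\<forall>k. norm (coeff G k) \<le> 1)
    \<Longrightarrow> (\<forall>j\<in>U. norm (r j) = 1)
    \<Longrightarrow> \<forall>k\<le>degree P. norm (coeff P k) \<le> real ((degree P - k + card U) choose card U)"
  using assms
proof (induction U arbitrary: P rule: finite_induct)
  case empty
  then show ?case by simp
next
  case (insert a F)
  let ?P' = "P * [:-r a,1:]"
  have "?P' * (\<Prod>j\<in>F. [:-r j,1:]) = G"
    by (metis insert(4) prod.insert[OF insert(1,2)] mult.assoc mult.commute)
  then have IH: "\<forall>k\<le>degree ?P'. norm (coeff ?P' k) \<le> real ((degree ?P' - k + card F) choose card F)"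
    using insert by auto
  have P0: "P \<noteq> 0" using insert(4,5) by auto
  show ?case using coeff_div_bound_step[OF P0 _ IH] insert by simp
qed

definition Pl :: "nat set \<Rightarrow> nat \<Rightarrow> nat \<Rightarrow> complex poly" where
  "Pl J q l = (\<Prod>j\<in>J - {l}. [:- om q j, 1:])"

lemma degree_Pl: assumes "finite J" "l \<in> J" shows "degree (Pl J q l) = card J - 1"
  unfolding Pl_def using assms by (subst degree_prod_eq_sum_degree) auto

lemma poly_Pl_other: assumes "finite J" "j \<in> J" "j \<noteq> l" shows "poly (Pl J q l) (om q j) = 0"
  unfolding Pl_def poly_prod using assms by (intro prod_zero) auto

lemma Pl_times_H:
  assumes q: "q > 0" and J: "J \<subseteq> {..<q}" and l: "l \<in> J"
  shows "Pl J q l * (\<Prod>j\<in>{..<q} - J. [:- om q j, 1:]) = Gp (om q l) q"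
proof -
  have lq: "l < q" using J l by auto
  have eq: "{..<q} - {l} = (J - {l}) \<union> ({..<q} - J)" using J l by auto
  have "Gp (om q l) q = (\<Prod>j\<in>(J - {l}) \<union> ({..<q} - J). [:- om q j, 1:])"
    unfolding Gp_prod[OF q lq] eq ..
  also have "\<dots> = Pl J q l * (\<Prod>j\<in>{..<q} - J. [:- om q j, 1:])"
    unfolding Pl_def using J finite_subset[OF J] by (subst prod.union_disjoint) auto
  finally show ?thesis by simp
qed

lemma om_ne0: "om q l \<noteq> 0" by (metis norm_om norm_zero zero_neq_one)

lemma coeff_Pl_bound:
  assumes q: "q > 0" and J: "J \<subseteq> {..<q}" and l: "l \<in> J"
  shows "norm (coeff (Pl J q l) k) \<le> real ((q - 1) choose (q - card J))"
proof -
  have fJ: "finite J" using J finite_subset by blast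
  have cJ: "card J \<le> q" using card_mono[OF _ J] by simp
  have cU: "card ({..<q} - J) = q - card J" using J fJ by (simp add: card_Diff_subset)
  have "lead_coeff (Gp (om q l) q) = 1" by (rule lead_Gp[OF q om_ne0[of q l]])
  then have G0: "Gp (om q l) q \<noteq> 0" by auto
  have Gc: "\<forall>k. norm (coeff (Gp (om q l) q) k) \<le> 1" by (simp add: coeff_Gp norm_power)
  have B: "\<forall>k\<le>degree (Pl J q l). norm (coeff (Pl J q l) k)
      \<le> real ((degree (Pl J q l) - k + card ({..<q} - J)) choose card ({..<q} - J))"
    by (rule coeff_div_bound[OF _ Pl_times_H[OF q J l] G0 Gc]) auto
  show ?thesis
  proof (cases "k \<le> degree (Pl J q l)")
    case True
    have "norm (coeff (Pl J q l) k) \<le> real ((degree (Pl J q l) - k + (q - card J)) choose (q - card J))"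
      using B True cU by simp
    also have "\<dots> \<le> real ((q - 1) choose (q - card J))"
    proof -
      have c1: "card J \<ge> 1" using l fJ card_0_eq[OF fJ] by (metis empty_iff less_one not_le)
      have "degree (Pl J q l) - k + (q - card J) \<le> q - 1" using degree_Pl[OF fJ l, of q] cJ c1 by linarith
      then show ?thesis using binomial_right_mono by simp
    qed
    finally show ?thesis .
  next
    case False
    then show ?thesis by (simp add: coeff_eq_0)
  qed
qed

lemma poly_Pl_self_bound:
  assumes q: "q > 0" and J: "J \<subseteq> {..<q}" and l: "l \<in> J"
  shows "real q / 2 ^ (q - card J) \<le> norm (poly (Pl J q l) (om q l))"
proof -
  let ?x = "om q l"
  let ?H = "(\<Prod>j\<in>{..<q} - J. [:- om q j, 1:])"
  have fJ: "finite J" using J finite_subset by blast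
  have cU: "card ({..<q} - J) = q - card J" using J fJ by (simp add: card_Diff_subset)
  have "poly (Gp ?x q) ?x = (\<Sum>k<q. ?x ^ (q - 1))" unfolding poly_Gp
  proof (rule sum.cong)
    fix k assume "k \<in> {..<q}"
    then have "q - 1 - k + k = q - 1" by simp
    then show "?x ^ (q - 1 - k) * ?x ^ k = ?x ^ (q - 1)" by (metis power_add)
  qed simp
  also have "\<dots> = of_nat q * ?x ^ (q - 1)" by simp
  finally have "norm (poly (Gp ?x q) ?x) = real q" by (simp add: norm_mult norm_power)
  then have eq: "norm (poly (Pl J q l) ?x) * norm (poly ?H ?x) = real q"
    unfolding Pl_times_H[OF q J l, symmetric] by (simp add: norm_mult)
  have "norm (poly ?H ?x) = (\<Prod>j\<in>{..<q} - J. norm (?x - om q j))"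
    by (simp add: poly_prod prod_norm)
  also have "\<dots> \<le> (\<Prod>j\<in>{..<q} - J. 2)"
  proof (rule prod_mono)
    fix j show "0 \<le> norm (?x - om q j) \<and> norm (?x - om q j) \<le> 2"
      using norm_triangle_ineq4[of ?x "om q j"] by simp
  qed
  also have "\<dots> = 2 ^ (q - card J)" using cU by simp
  finally have Hb: "norm (poly ?H ?x) \<le> 2 ^ (q - card J)" .
  have Hp: "norm (poly ?H ?x) > 0" using eq q by (metis mult_zero_right norm_ge_zero of_nat_0_less_iff order_le_less)
  have "real q = norm (poly (Pl J q l) ?x) * norm (poly ?H ?x)" using eq by simp
  also have "\<dots> \<le> norm (poly (Pl J q l) ?x) * 2 ^ (q - card J)"
    by (rule mult_left_mono[OF Hb]) simp
  finally show ?thesis by (simp add: divide_le_eq)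
qed

lemma sum_sq_le:
  fixes f :: "nat \<Rightarrow> real"
  shows "(\<Sum>k<t. f k)\<^sup>2 \<le> real t * (\<Sum>k<t. (f k)\<^sup>2)"
proof -
  have "(\<Sum>k<t. f k)\<^sup>2 = (\<Sum>k<t. \<Sum>j<t. f k * f j)"
    by (simp add: power2_eq_square sum_product)
  also have "\<dots> \<le> (\<Sum>k<t. \<Sum>j<t. ((f k)\<^sup>2 + (f j)\<^sup>2) / 2)"
  proof (intro sum_mono)
    fix k j
    have "0 \<le> (f k - f j)\<^sup>2" by simp
    then show "f k * f j \<le> ((f k)\<^sup>2 + (f j)\<^sup>2) / 2" by (simp add: power2_diff field_simps)
  qed
  also have "\<dots> = real t * (\<Sum>k<t. (f k)\<^sup>2)"
    by (simp add: sum.distrib add_divide_distrib sum_divide_distrib[symmetric] sum_distrib_left[symmetric]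
        sum.swap[of "\<lambda>k j. (f j)\<^sup>2 / 2"])
  finally show ?thesis .
qed

lemma vander_lower:
  fixes x y :: "nat \<Rightarrow> complex" and a :: "nat \<Rightarrow> nat \<Rightarrow> complex"
  assumes inv: "\<And>i m. i < t \<Longrightarrow> m < t \<Longrightarrow> (\<Sum>k<t. a i k * x m ^ k) = (if m = i then 1 else 0)"
    and bnd: "\<And>i k. i < t \<Longrightarrow> k < t \<Longrightarrow> norm (a i k) \<le> A"
  shows "(\<Sum>i<t. (norm (y i))\<^sup>2) \<le> (A * t)\<^sup>2 * (\<Sum>k<t. (norm (\<Sum>m<t. x m ^ k * y m))\<^sup>2)"
proof -
  define s where "s k = (\<Sum>m<t. x m ^ k * y m)" for k
  define R where "R = (\<Sum>k<t. (norm (s k))\<^sup>2)"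
  have A0: "0 \<le> A" if "0 < t" using bnd[of 0 0] that by (meson norm_ge_zero order_trans)
  have yi: "y i = (\<Sum>k<t. a i k * s k)" if i: "i < t" for i
  proof -
    have "(\<Sum>k<t. a i k * s k) = (\<Sum>k<t. \<Sum>m<t. a i k * x m ^ k * y m)"
      unfolding s_def by (simp add: sum_distrib_left mult_ac)
    also have "\<dots> = (\<Sum>m<t. (\<Sum>k<t. a i k * x m ^ k) * y m)"
      by (subst sum.swap) (simp add: sum_distrib_right)
    also have "\<dots> = (\<Sum>m<t. (if m = i then y m else 0))"
      by (rule sum.cong) (auto simp: inv i)
    also have "\<dots> = y i" using i by simp
    finally show ?thesis by simp
  qed
  have "(norm (y i))\<^sup>2 \<le> A\<^sup>2 * (real t * R)" if i: "i < t" for i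
  proof -
    have "norm (y i) \<le> (\<Sum>k<t. norm (a i k * s k))" unfolding yi[OF i] by (rule norm_sum)
    also have "\<dots> \<le> (\<Sum>k<t. A * norm (s k))"
      by (intro sum_mono) (simp add: norm_mult bnd i mult_right_mono)
    also have "\<dots> = A * (\<Sum>k<t. norm (s k))" by (simp add: sum_distrib_left)
    finally have le: "norm (y i) \<le> A * (\<Sum>k<t. norm (s k))" .
    have "(norm (y i))\<^sup>2 \<le> (A * (\<Sum>k<t. norm (s k)))\<^sup>2"
      by (rule power_mono[OF le norm_ge_zero])
    also have "\<dots> = A\<^sup>2 * (\<Sum>k<t. norm (s k))\<^sup>2" by (simp add: power_mult_distrib)
    also have "\<dots> \<le> A\<^sup>2 * (real t * R)" unfolding R_def
      by (rule mult_left_mono[OF sum_sq_le]) simp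
    finally show ?thesis .
  qed
  then have "(\<Sum>i<t. (norm (y i))\<^sup>2) \<le> (\<Sum>i<t. A\<^sup>2 * (real t * R))" by (intro sum_mono) auto
  also have "\<dots> = (A * t)\<^sup>2 * R" by (simp add: power2_eq_square)
  finally show ?thesis unfolding R_def s_def .
qed

definition Aq :: "nat \<Rightarrow> nat \<Rightarrow> real" where
  "Aq q t = real ((q - 1) choose (q - t)) * 2 ^ (q - t) / real q"

lemma vander_idx:
  assumes q: "q > 0" and d: "distinct idx" and lt: "\<forall>i\<in>set idx. i < q" and t: "length idx = t" "t > 0"
  shows "(\<Sum>i<t. (norm (y i))\<^sup>2) \<le> (Aq q t * t)\<^sup>2 * (\<Sum>k<t. (norm (\<Sum>m<t. om q (idx ! m) ^ k * y m))\<^sup>2)"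
proof -
  let ?J = "set idx"
  have J: "?J \<subseteq> {..<q}" using lt by auto
  have cJ: "card ?J = t" using d t distinct_card by blast
  have fJ: "finite ?J" by simp
  define P where "P i = Pl ?J q (idx ! i)" for i
  define D where "D i = poly (P i) (om q (idx ! i))" for i
  define a where "a i k = coeff (P i) k / D i" for i k
  have inJ: "idx ! i \<in> ?J" if "i < t" for i using that t by auto
  have Db: "real q / 2 ^ (q - t) \<le> norm (D i)" if "i < t" for i
    unfolding D_def P_def using poly_Pl_self_bound[OF q J inJ[OF that]] cJ by simp
  have D0: "D i \<noteq> 0" if "i < t" for i
  proof -
    have "0 < real q / 2 ^ (q - t)" using q by simp
    then show ?thesis using Db[OF that] by auto
  qed
  show ?thesis
  proof (rule vander_lower)
    fix i m assume i: "i < t" and m: "m < t"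
    have degP: "degree (P i) = t - 1" unfolding P_def using degree_Pl[OF fJ inJ[OF i]] cJ by simp
    have "(\<Sum>k<t. a i k * om q (idx ! m) ^ k) = (\<Sum>k\<le>degree (P i). coeff (P i) k * om q (idx ! m) ^ k) / D i"
    proof -
      have "{..<t} = {..degree (P i)}" using degP t(2) by auto
      then show ?thesis unfolding a_def by (simp add: sum_divide_distrib)
    qed
    also have "\<dots> = poly (P i) (om q (idx ! m)) / D i" by (simp add: poly_altdef)
    also have "\<dots> = (if m = i then 1 else 0)"
    proof (cases "m = i")
      case True then show ?thesis using D0[OF i] unfolding D_def by simp
    next
      case False
      then have "idx ! m \<noteq> idx ! i" using d i m t nth_eq_iff_index_eq by auto
      then have "poly (P i) (om q (idx ! m)) = 0" unfolding P_def
        by (intro poly_Pl_other) (use inJ[OF m] in auto)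
      then show ?thesis using False by simp
    qed
    finally show "(\<Sum>k<t. a i k * om q (idx ! m) ^ k) = (if m = i then 1 else 0)" .
  next
    fix i k assume i: "i < t" and k: "k < t"
    have "norm (a i k) = norm (coeff (P i) k) / norm (D i)" unfolding a_def by (simp add: norm_divide)
    also have "\<dots> \<le> real ((q - 1) choose (q - t)) / (real q / 2 ^ (q - t))"
    proof (rule frac_le)
      show "norm (coeff (P i) k) \<le> real ((q - 1) choose (q - t))"
        unfolding P_def using coeff_Pl_bound[OF q J inJ[OF i]] cJ by simp
      show "0 < real q / 2 ^ (q - t)" using q by simp
    qed (use Db[OF i] in auto)
    also have "\<dots> = Aq q t" unfolding Aq_def by simp
    finally show "norm (a i k) \<le> Aq q t" .
  qed
qed

lemma vander_cis:
  assumes q: "q > 0" and d: "distinct idx" and lt: "\<forall>i\<in>set idx. i < q" and t: "length idx = t" "t > 0"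
  shows "(\<Sum>i<t. (norm (y i))\<^sup>2) \<le> (Aq q t * t)\<^sup>2 *
     (\<Sum>k<t. (norm (\<Sum>m<t. cis (2 * pi / real q * real (idx ! m) * (e0 + real k)) * y m))\<^sup>2)"
proof -
  define y' where "y' m = cis (2 * pi / real q * real (idx ! m) * e0) * y m" for m
  have "(\<Sum>i<t. (norm (y i))\<^sup>2) = (\<Sum>i<t. (norm (y' i))\<^sup>2)" unfolding y'_def by (simp add: norm_mult)
  also have "\<dots> \<le> (Aq q t * t)\<^sup>2 * (\<Sum>k<t. (norm (\<Sum>m<t. om q (idx ! m) ^ k * y' m))\<^sup>2)"
    by (rule vander_idx[OF q d lt t])
  also have "(\<Sum>k<t. (norm (\<Sum>m<t. om q (idx ! m) ^ k * y' m))\<^sup>2)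
     = (\<Sum>k<t. (norm (\<Sum>m<t. cis (2 * pi / real q * real (idx ! m) * (e0 + real k)) * y m))\<^sup>2)"
  proof (intro sum.cong refl arg_cong[where f="\<lambda>x. (norm x)\<^sup>2"])
    fix k m
    have "om q (idx ! m) ^ k * cis (2 * pi / real q * real (idx ! m) * e0)
        = cis (2 * pi / real q * real (idx ! m) * (e0 + real k))"
      unfolding om_def DeMoivre cis_mult by (simp add: algebra_simps add_divide_distrib)
    then show "om q (idx ! m) ^ k * y' m = cis (2 * pi / real q * real (idx ! m) * (e0 + real k)) * y m"
      unfolding y'_def by (simp add: mult_ac)
  qed
  finally show ?thesis .
qed



lemma sym_real_eigenvalue_exists:
  fixes A :: "real mat"
  assumes A: "A \<in> carrier_mat N N" and N: "N > 0" and sym: "\<And>i j. i < N \<Longrightarrow> j < N \<Longrightarrow> A $$ (i,j) = A $$ (j,i)"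
  shows "\<exists>e. eigenvalue A e"
proof -
  let ?Ac = "map_mat complex_of_real A"
  have Ac: "?Ac \<in> carrier_mat N N" using A by simp
  have cp: "char_poly ?Ac = map_poly of_real (char_poly A)"
    using of_real_hom.char_poly_hom[OF A] by simp
  have "degree (char_poly ?Ac) = N" using degree_monic_char_poly[OF Ac] by simp
  then have "\<not> constant (poly (char_poly ?Ac))" using N by (simp add: constant_degree)
  then obtain lam where "poly (char_poly ?Ac) lam = 0" using fundamental_theorem_of_algebra by blast
  then have "eigenvalue ?Ac lam" using eigenvalue_root_char_poly[OF Ac] by simp
  then obtain v where v: "v \<in> carrier_vec N" "v \<noteq> 0\<^sub>v N" "?Ac *\<^sub>v v = lam \<cdot>\<^sub>v v"
    unfolding eigenvalue_def eigenvector_def using A by auto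
  have row: "(\<Sum>j<N. complex_of_real (A $$ (i,j)) * v $ j) = lam * v $ i" if i: "i < N" for i
  proof -
    have "(?Ac *\<^sub>v v) $ i = lam * v $ i" using v(3) v(1) i by simp
    moreover have "(?Ac *\<^sub>v v) $ i = (\<Sum>j<N. complex_of_real (A $$ (i,j)) * v $ j)"
      using A v(1) i by (simp add: scalar_prod_def lessThan_atLeast0)
    ultimately show ?thesis by simp
  qed
  define S where "S = (\<Sum>i<N. (\<Sum>j<N. complex_of_real (A $$ (i,j)) * v $ j) * cnj (v $ i))"
  define R where "R = (\<Sum>i<N. (cmod (v $ i))\<^sup>2)"
  have S1: "S = lam * of_real R"
  proof -
    have "S = (\<Sum>i<N. lam * (v $ i * cnj (v $ i)))" unfolding S_def by (simp add: row mult.assoc)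
    also have "\<dots> = lam * of_real R" unfolding R_def
      by (simp only: of_real_sum sum_distrib_left complex_norm_square)
    finally show ?thesis .
  qed
  have "cnj S = (\<Sum>i<N. \<Sum>j<N. complex_of_real (A $$ (i,j)) * cnj (v $ j) * v $ i)"
    unfolding S_def by (simp add: sum_distrib_right)
  also have "\<dots> = (\<Sum>j<N. \<Sum>i<N. complex_of_real (A $$ (i,j)) * cnj (v $ j) * v $ i)"
    by (rule sum.swap)
  also have "\<dots> = S" unfolding S_def sum_distrib_right
    by (intro sum.cong refl) (simp add: sym mult_ac)
  finally have "cnj S = S" .
  then have ImS: "Im S = 0" by (metis Reals_cnj_iff complex_is_Real_iff)
  have "R > 0"
  proof -
    obtain i where i: "i < N" "v $ i \<noteq> 0" using v(1,2) by (metis eq_vecI carrier_vecD index_zero_vec)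
    have "(cmod (v $ i))\<^sup>2 > 0" using i by simp
    moreover have "(cmod (v $ i))\<^sup>2 \<le> R" unfolding R_def
      by (rule member_le_sum) (use i in auto)
    ultimately show ?thesis by linarith
  qed
  then have "Im lam = 0" using S1 ImS by simp
  then have lam: "lam = of_real (Re lam)" by (simp add: complex_eq_iff)
  have "of_real (poly (char_poly A) (Re lam)) = poly (char_poly ?Ac) lam"
    unfolding cp by (subst lam) (simp only: of_real_hom.poly_map_poly)
  also have "\<dots> = 0" by fact
  finally have "poly (char_poly A) (Re lam) = 0" by simp
  then show ?thesis using eigenvalue_root_char_poly[OF A] by blast
qed

lemma real_sprod_pos: "v \<in> carrier_vec N \<Longrightarrow> v \<noteq> 0\<^sub>v N \<Longrightarrow> (v :: real vec) \<bullet> v > 0"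
  using conjugate_square_greater_0_vec[of v N] by simp

lemma real_sprod_nonneg: "(v :: real vec) \<bullet> v \<ge> 0"
  using conjugate_square_ge_0_vec[of v] by simp

lemma spec_norm_le:
  fixes M :: "real mat"
  assumes M: "M \<in> carrier_mat N N" and N: "N > 0" and B: "B \<ge> 0"
    and H: "\<And>v. v \<in> carrier_vec N \<Longrightarrow> (M *\<^sub>v v) \<bullet> (M *\<^sub>v v) \<le> B\<^sup>2 * (v \<bullet> v)"
  shows "spec_norm M \<le> B \<and> 0 \<le> spec_norm M"
proof -
  let ?A = "transpose_mat M * M"
  have A: "?A \<in> carrier_mat N N" using M by simp
  have sym: "?A $$ (i,j) = ?A $$ (j,i)" if "i < N" "j < N" for i j
    using M that by (simp add: scalar_prod_def mult.commute)
  let ?E = "{e. eigenvalue ?A e}"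
  have "?E \<subseteq> {x. poly (char_poly ?A) x = 0}" using eigenvalue_root_char_poly[OF A] by auto
  moreover have "char_poly ?A \<noteq> 0" using degree_monic_char_poly[OF A] by auto
  ultimately have fin: "finite ?E" using poly_roots_finite finite_subset by blast
  have ne: "?E \<noteq> {}" using sym_real_eigenvalue_exists[OF A N sym] by auto
  have ev: "0 \<le> e \<and> e \<le> B\<^sup>2" if "e \<in> ?E" for e
  proof -
    have "eigenvalue ?A e" using that by simp
    then obtain v where v: "v \<in> carrier_vec N" "v \<noteq> 0\<^sub>v N" "?A *\<^sub>v v = e \<cdot>\<^sub>v v"
      unfolding eigenvalue_def eigenvector_def using A by auto
    have Mv: "M *\<^sub>v v \<in> carrier_vec N" using M v by simp
    have "e * (v \<bullet> v) = (?A *\<^sub>v v) \<bullet> v" using v by simp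
    also have "\<dots> = (transpose_mat M *\<^sub>v (M *\<^sub>v v)) \<bullet> v"
      using M v by (subst assoc_mult_mat_vec[of _ N N _ N]) auto
    also have "\<dots> = (M *\<^sub>v v) \<bullet> (M *\<^sub>v v)"
      by (rule transpose_vec_mult_scalar[OF M v(1) Mv])
    finally have eq: "e * (v \<bullet> v) = (M *\<^sub>v v) \<bullet> (M *\<^sub>v v)" .
    have pos: "v \<bullet> v > 0" using real_sprod_pos[OF v(1,2)] .
    have "e * (v \<bullet> v) \<le> B\<^sup>2 * (v \<bullet> v)" using eq H[OF v(1)] by simp
    then have "e \<le> B\<^sup>2" using pos by simp
    moreover have "0 \<le> e * (v \<bullet> v)" using eq real_sprod_nonneg by simp
    then have "0 \<le> e" using pos by (simp add: zero_le_mult_iff)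
    ultimately show ?thesis by simp
  qed
  have "Max ?E \<le> B\<^sup>2" using fin ne ev by simp
  moreover have "0 \<le> Max ?E" using fin ne ev by (meson Max_in)
  ultimately show ?thesis unfolding spec_norm_def using B real_sqrt_le_mono[of "Max ?E" "B\<^sup>2"] by simp
qed

lemma inv_mat_props:
  fixes M :: "real mat"
  assumes M: "M \<in> carrier_mat N N" and inv: "invertible_mat M"
  shows "inv_mat M \<in> carrier_mat N N \<and> M * inv_mat M = 1\<^sub>m N \<and> inv_mat M * M = 1\<^sub>m N"
proof -
  obtain B where B1: "M * B = 1\<^sub>m N" and B2: "B * M = 1\<^sub>m (dim_row B)"
    using inv M unfolding invertible_mat_def inverts_mat_def by auto
  have "dim_col B = N" using B1 by (metis index_mult_mat(3) index_one_mat(3))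
  moreover have "dim_row B = N" using B2 M by (metis carrier_matD(2) index_mult_mat(3) index_one_mat(3))
  ultimately have Bc: "B \<in> carrier_mat N N" by auto
  have P: "B \<in> carrier_mat (dim_row M) (dim_row M) \<and> inverts_mat M B \<and> inverts_mat B M"
    using Bc B1 B2 M unfolding inverts_mat_def by auto
  have U: "B' = B" if "B' \<in> carrier_mat (dim_row M) (dim_row M) \<and> inverts_mat M B' \<and> inverts_mat B' M" for B'
  proof -
    have B'c: "B' \<in> carrier_mat N N" and B'1: "B' * M = 1\<^sub>m N" using that M unfolding inverts_mat_def by auto
    have "B' = B' * (M * B)" using B'c B1 by simp
    also have "\<dots> = (B' * M) * B" using B'c M Bc by (simp add: assoc_mult_mat)
    also have "\<dots> = B" using B'1 Bc by simp
    finally show ?thesis .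
  qed
  have "inv_mat M = B" unfolding inv_mat_def using P U by (rule the_equality)
  then show ?thesis using Bc B1 B2 by simp
qed

lemma invertible_of_inj:
  fixes M :: "real mat"
  assumes M: "M \<in> carrier_mat N N"
    and H: "\<And>v. v \<in> carrier_vec N \<Longrightarrow> M *\<^sub>v v = 0\<^sub>v N \<Longrightarrow> v = 0\<^sub>v N"
  shows "invertible_mat M"
proof -
  have "det M \<noteq> 0" using det_0_iff_vec_prod_zero_field[OF M] H by auto
  from det_non_zero_imp_unit[OF M this, of "()"]
  obtain B where B: "B \<in> carrier_mat N N" "B * M = 1\<^sub>m N" "M * B = 1\<^sub>m N"
    unfolding Units_def ring_mat_def by auto
  then show ?thesis unfolding invertible_mat_def inverts_mat_def square_mat.simps using M by auto
qed

lemma cond_bound: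
  fixes M :: "real mat"
  assumes M: "M \<in> carrier_mat N N" and N: "N > 0" and c: "c > 0" and B: "B \<ge> 0"
    and lo: "\<And>v. v \<in> carrier_vec N \<Longrightarrow> c\<^sup>2 * (v \<bullet> v) \<le> (M *\<^sub>v v) \<bullet> (M *\<^sub>v v)"
    and hi: "\<And>v. v \<in> carrier_vec N \<Longrightarrow> (M *\<^sub>v v) \<bullet> (M *\<^sub>v v) \<le> B\<^sup>2 * (v \<bullet> v)"
  shows "invertible_mat M \<and> cond_num M \<le> B / c"
proof -
  have inv: "invertible_mat M"
  proof (rule invertible_of_inj[OF M])
    fix v assume v: "v \<in> carrier_vec N" "M *\<^sub>v v = 0\<^sub>v N"
    have "c\<^sup>2 * (v \<bullet> v) \<le> 0" using lo[OF v(1)] v(2) by simp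
    then have "v \<bullet> v \<le> 0" using c by (simp add: mult_le_0_iff)
    then show "v = 0\<^sub>v N" using real_sprod_pos[OF v(1)] by fastforce
  qed
  let ?Mi = "inv_mat M"
  have Mi: "?Mi \<in> carrier_mat N N" "M * ?Mi = 1\<^sub>m N" using inv_mat_props[OF M inv] by auto
  have s1: "spec_norm M \<le> B \<and> 0 \<le> spec_norm M" by (rule spec_norm_le[OF M N B hi])
  have s2: "spec_norm ?Mi \<le> 1 / c \<and> 0 \<le> spec_norm ?Mi"
  proof (rule spec_norm_le[OF Mi(1) N])
    show "0 \<le> 1 / c" using c by simp
    fix u :: "real vec" assume u: "u \<in> carrier_vec N"
    let ?w = "?Mi *\<^sub>v u"
    have w: "?w \<in> carrier_vec N" using Mi u by simp
    have "M *\<^sub>v ?w = (M * ?Mi) *\<^sub>v u" by (rule assoc_mult_mat_vec[OF M Mi(1) u, symmetric])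
    also have "\<dots> = u" using Mi u by simp
    finally have "c\<^sup>2 * (?w \<bullet> ?w) \<le> u \<bullet> u" using lo[OF w] by simp
    then show "?w \<bullet> ?w \<le> (1 / c)\<^sup>2 * (u \<bullet> u)" using c by (simp add: field_simps power2_eq_square)
  qed
  have "cond_num M = spec_norm M * spec_norm ?Mi" unfolding cond_num_def ..
  also have "\<dots> \<le> B * (1 / c)" using s1 s2 by (intro mult_mono) auto
  finally show ?thesis using inv by simp
qed



lemma rot_carrier [simp]: "rot a \<in> carrier_mat 2 2" unfolding rot_def by simp
lemma rot_dims [simp]: "dim_row (rot a) = 2" "dim_col (rot a) = 2" unfolding rot_def by simp_all

lemma rot_index: "i < 2 \<Longrightarrow> c < 2 \<Longrightarrow> rot a $$ (i,c) =
   (if i = 0 \<and> c = 0 then cos a else if i = 0 \<and> c = 1 then - sin a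
    else if i = 1 \<and> c = 0 then sin a else cos a)"
  unfolding rot_def by simp

lemma rot_mult: "rot a * rot b = rot (a + b)"
proof (rule eq_matI)
  fix i j assume "i < dim_row (rot (a + b))" "j < dim_col (rot (a + b))"
  then have ij: "i < 2" "j < 2" unfolding rot_def by auto
  have "(rot a * rot b) $$ (i,j) = (\<Sum>k<2. rot a $$ (i,k) * rot b $$ (k,j))"
    using ij by (simp add: scalar_prod_def lessThan_atLeast0)
  also have "\<dots> = rot (a + b) $$ (i,j)"
    using ij by (auto simp: rot_index numeral_2_eq_2 cos_add sin_add less_Suc_eq)
  finally show "(rot a * rot b) $$ (i,j) = rot (a + b) $$ (i,j)" .
qed (auto simp: rot_def)

lemma rot_0: "rot 0 = 1\<^sub>m 2"
  by (rule eq_matI) (auto simp: rot_def)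

lemma rot_pow: "rot a ^\<^sub>m k = rot (real k * a)"
proof (induction k)
  case 0 then show ?case by (simp add: rot_0[symmetric] rot_def)
next
  case (Suc k)
  have "rot a ^\<^sub>m Suc k = rot a ^\<^sub>m k * rot a" by simp
  also have "\<dots> = rot (real (Suc k) * a)" unfolding Suc rot_mult by (simp add: algebra_simps)
  finally show ?case .
qed

lemma kron_index:
  assumes "i < dim_row A * dim_row B" "j < dim_col A * dim_col B"
  shows "kron A B $$ (i,j) = A $$ (i div dim_row B, j div dim_col B) * B $$ (i mod dim_row B, j mod dim_col B)"
  unfolding kron_def using assms by simp

lemma block_col_dims [simp]: "dim_row (block_col G l) = dim_row G" "dim_col (block_col G l) = 2"
  unfolding block_col_def by simp_all

lemma block_col_index: "r < dim_row G \<Longrightarrow> c < 2 \<Longrightarrow> block_col G l $$ (r,c) = G $$ (r, 2*l+c)"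
  unfolding block_col_def by simp

lemma GA_dims [simp]: "dim_row (GA t kA n) = 2*kA" "dim_col (GA t kA n) = 2*n"
  unfolding GA_def by simp_all
lemma GB_dims [simp]: "dim_row (GB t kA kB n) = 2*kB" "dim_col (GB t kA kB n) = 2*n"
  unfolding GB_def by simp_all

lemma recovery_entry:
  fixes \<theta> :: real
  assumes al: "\<alpha> < kA" and i: "i < 2" and be: "\<beta> < kB" and j: "j < 2"
    and m: "m < length idx" and c1: "c1 < 2" and c2: "c2 < 2" and ln: "idx ! m < n"
    and len: "length idx = kA * kB"
  shows "recovery_mat \<theta> kA kB n idx $$ ((\<alpha>*2+i)*(kB*2)+(\<beta>*2+j), m*4+(c1*2+c2))
     = rot (real (idx ! m * \<alpha>) * \<theta>) $$ (i,c1) * rot (real (idx ! m * kA * \<beta>) * \<theta>) $$ (j,c2)"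
proof -
  let ?r = "(\<alpha>*2+i)*(kB*2)+(\<beta>*2+j)"
  let ?c = "m*4+(c1*2+c2)"
  let ?l = "idx ! m"
  have y: "\<beta>*2+j < kB*2" using be j by linarith
  have x: "\<alpha>*2+i < kA*2" using al i by linarith
  have r: "?r < 4*kA*kB"
  proof -
    have "?r < (\<alpha>*2+i)*(kB*2) + kB*2" using y by linarith
    also have "\<dots> = (\<alpha>*2+i+1)*(kB*2)" by (simp add: algebra_simps)
    also have "\<dots> \<le> (kA*2)*(kB*2)" using x by (intro mult_right_mono) auto
    finally show ?thesis by (simp add: algebra_simps)
  qed
  have cc: "c1*2+c2 < 4" using c1 c2 by linarith
  have c: "?c < 4 * length idx" using m cc by linarith
  have rdiv: "?r div (2*kB) = \<alpha>*2+i" and rmod: "?r mod (2*kB) = \<beta>*2+j"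
    using y by (simp_all add: mult.commute[of 2 kB])
  have cdiv: "?c div 4 = m" and cmod: "?c mod 4 = c1*2+c2" using cc by simp_all
  have cmod': "(c1*2+c2) mod 4 = c1*2+c2" using cc by simp
  have c2m: "c2 mod 2 = c2" using c2 by simp
  have c1d: "(c1*2+c2) div 2 = c1" "(c1*2+c2) mod 2 = c2" using c2 by simp_all
  have ad: "(\<alpha>*2+i) div 2 = \<alpha>" "(\<alpha>*2+i) mod 2 = i" using i by simp_all
  have bd: "(\<beta>*2+j) div 2 = \<beta>" "(\<beta>*2+j) mod 2 = j" using j by simp_all
  have ld: "(2*?l + c1) div 2 = ?l" "(2*?l + c1) mod 2 = c1" using c1 by simp_all
  have ld2: "(2*?l + c2) div 2 = ?l" "(2*?l + c2) mod 2 = c2" using c2 by simp_all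
  have lc1: "2*?l + c1 < 2*n" using ln c1 by linarith
  have lc2: "2*?l + c2 < 2*n" using ln c2 by linarith
  have "recovery_mat \<theta> kA kB n idx $$ (?r, ?c) =
      kron (block_col (GA \<theta> kA n) ?l) (block_col (GB \<theta> kA kB n) ?l) $$ (?r, c1*2+c2)"
    unfolding recovery_mat_def using r c by (simp add: cdiv cmod cmod')
  also have "\<dots> = block_col (GA \<theta> kA n) ?l $$ (\<alpha>*2+i, c1) * block_col (GB \<theta> kA kB n) ?l $$ (\<beta>*2+j, c2)"
  proof -
    have r': "?r < dim_row (block_col (GA \<theta> kA n) ?l) * dim_row (block_col (GB \<theta> kA kB n) ?l)"
      using r by (simp add: algebra_simps)
    have c': "c1*2+c2 < dim_col (block_col (GA \<theta> kA n) ?l) * dim_col (block_col (GB \<theta> kA kB n) ?l)"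
      using cc by simp
    show ?thesis unfolding kron_index[OF r' c'] by (simp only: block_col_dims GB_dims rdiv rmod c1d)
  qed
  also have "\<dots> = GA \<theta> kA n $$ (\<alpha>*2+i, 2*?l+c1) * GB \<theta> kA kB n $$ (\<beta>*2+j, 2*?l+c2)"
    using x y c1 c2 by (simp add: block_col_index mult.commute[of 2])
  also have "GA \<theta> kA n $$ (\<alpha>*2+i, 2*?l+c1) = rot (real (idx ! m * \<alpha>) * \<theta>) $$ (i,c1)"
  proof -
    have "\<alpha>*2+i < 2*kA" using x by simp
    then show ?thesis unfolding GA_def using lc1 i c1 by (simp add: ad ld rot_pow)
  qed
  also have "GB \<theta> kA kB n $$ (\<beta>*2+j, 2*?l+c2) = rot (real (idx ! m * kA * \<beta>) * \<theta>) $$ (j,c2)"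
  proof -
    have "\<beta>*2+j < 2*kB" using y by simp
    then show ?thesis unfolding GB_def using lc2 j c2 by (simp add: bd ld2 rot_pow)
  qed
  finally show ?thesis .
qed

lemma sum_shift_add: "(\<Sum>r<c+(b::nat). f r) = (\<Sum>r<c. f r) + (\<Sum>y<b. f (c+y))"
  by (induction b) (simp_all add: add.assoc)

lemma sum_split: "(\<Sum>r<a*(b::nat). f r) = (\<Sum>x<a. \<Sum>y<b. f (x*b+y))"
proof (induction a)
  case 0 then show ?case by simp
next
  case (Suc a)
  have "(\<Sum>r<Suc a * b. f r) = (\<Sum>r<a*b + b. f r)" by (simp add: add.commute)
  also have "\<dots> = (\<Sum>r<a*b. f r) + (\<Sum>y<b. f (a*b+y))" by (rule sum_shift_add)
  finally show ?case using Suc by simp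
qed

lemma sum2: "(\<Sum>i<(2::nat). f i) = f 0 + f 1"
  by (simp add: numeral_2_eq_2)

definition zc :: "(nat \<Rightarrow> nat \<Rightarrow> real) \<Rightarrow> complex" where
  "zc X = Complex ((X 0 0 + X 1 1)/2) ((X 1 0 - X 0 1)/2)"
definition wc :: "(nat \<Rightarrow> nat \<Rightarrow> real) \<Rightarrow> complex" where
  "wc X = Complex ((X 0 0 - X 1 1)/2) ((X 1 0 + X 0 1)/2)"
definition cmpt :: "nat \<Rightarrow> nat \<Rightarrow> complex \<Rightarrow> complex \<Rightarrow> real" where
  "cmpt i j Z W = (if i = 0 then (if j = 0 then Re Z + Re W else Im W - Im Z)
                   else (if j = 0 then Im Z + Im W else Re Z - Re W))"

lemma term_id:
  assumes "i < 2" "j < 2"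
  shows "(\<Sum>c1<2. \<Sum>c2<2. rot a $$ (i,c1) * rot b $$ (j,c2) * X c1 c2)
       = cmpt i j (cis (a - b) * zc X) (cis (a + b) * wc X)"
proof -
  have "i = 0 \<or> i = 1" "j = 0 \<or> j = 1" using assms by auto
  then show ?thesis
    by (auto simp: sum2 rot_index cmpt_def zc_def wc_def cos_diff sin_diff cos_add sin_add
        field_simps)
qed

lemma comp_sum: "cmpt i j (\<Sum>m\<in>A. Z m) (\<Sum>m\<in>A. W m) = (\<Sum>m\<in>A. cmpt i j (Z m) (W m))"
  unfolding cmpt_def by (simp add: sum.distrib sum_subtractf)

lemma comp_sq: "(\<Sum>i<2. \<Sum>j<2. (cmpt i j Z W)\<^sup>2) = 2 * ((cmod Z)\<^sup>2 + (cmod W)\<^sup>2)"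
  by (simp add: sum2 cmpt_def cmod_power2 power2_sum power2_diff algebra_simps)

lemma X_sq: "(\<Sum>c1<2. \<Sum>c2<2. (X c1 c2)\<^sup>2) = 2 * ((cmod (zc X))\<^sup>2 + (cmod (wc X))\<^sup>2)"
  by (simp add: sum2 zc_def wc_def cmod_power2 power2_sum power2_diff power_divide field_simps)

definition Xv :: "real vec \<Rightarrow> nat \<Rightarrow> nat \<Rightarrow> nat \<Rightarrow> real" where
  "Xv v m c1 c2 = v $ (m*4+(c1*2+c2))"

lemma recovery_dims [simp]:
  "dim_row (recovery_mat t kA kB n idx) = 4*kA*kB" "dim_col (recovery_mat t kA kB n idx) = 4 * length idx"
  unfolding recovery_mat_def by simp_all

lemma row_formula:
  assumes len: "length idx = kA*kB" and lt: "\<forall>i\<in>set idx. i < n" and v: "v \<in> carrier_vec (4*kA*kB)"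
    and al: "\<alpha> < kA" and be: "\<beta> < kB" and i: "i < 2" and j: "j < 2"
  shows "(recovery_mat \<theta> kA kB n idx *\<^sub>v v) $ ((\<alpha>*2+i)*(kB*2)+(\<beta>*2+j))
    = cmpt i j (\<Sum>m<kA*kB. cis (\<theta> * real (idx!m) * (real \<alpha> - real kA * real \<beta>)) * zc (Xv v m))
               (\<Sum>m<kA*kB. cis (\<theta> * real (idx!m) * (real \<alpha> + real kA * real \<beta>)) * wc (Xv v m))"
proof -
  let ?M = "recovery_mat \<theta> kA kB n idx"
  let ?r = "(\<alpha>*2+i)*(kB*2)+(\<beta>*2+j)"
  let ?t = "kA*kB"
  have y: "\<beta>*2+j < kB*2" using be j by linarith
  have x: "\<alpha>*2+i < kA*2" using al i by linarith
  have r: "?r < 4*kA*kB"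
  proof -
    have "?r < (\<alpha>*2+i)*(kB*2) + kB*2" using y by linarith
    also have "\<dots> = (\<alpha>*2+i+1)*(kB*2)" by (simp add: algebra_simps)
    also have "\<dots> \<le> (kA*2)*(kB*2)" using x by (intro mult_right_mono) auto
    finally show ?thesis by (simp add: algebra_simps)
  qed
  have dv: "dim_vec v = ?t * 4" using v by simp
  have "(?M *\<^sub>v v) $ ?r = (\<Sum>c<?t*4. ?M $$ (?r, c) * v $ c)"
    using r len dv by (simp add: scalar_prod_def lessThan_atLeast0 mult.commute)
  also have "\<dots> = (\<Sum>m<?t. \<Sum>c'<4. ?M $$ (?r, m*4+c') * v $ (m*4+c'))"
    by (rule sum_split)
  also have "\<dots> = (\<Sum>m<?t. \<Sum>c1<2. \<Sum>c2<2. ?M $$ (?r, m*4+(c1*2+c2)) * v $ (m*4+(c1*2+c2)))"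
  proof (rule sum.cong[OF refl])
    fix m
    show "(\<Sum>c'<4. ?M $$ (?r, m*4+c') * v $ (m*4+c')) = (\<Sum>c1<2. \<Sum>c2<2. ?M $$ (?r, m*4+(c1*2+c2)) * v $ (m*4+(c1*2+c2)))"
      using sum_split[of "\<lambda>c'. ?M $$ (?r, m*4+c') * v $ (m*4+c')" 2 2] by simp
  qed
  also have "\<dots> = (\<Sum>m<?t. \<Sum>c1<2. \<Sum>c2<2. rot (real (idx ! m * \<alpha>) * \<theta>) $$ (i,c1)
        * rot (real (idx ! m * kA * \<beta>) * \<theta>) $$ (j,c2) * Xv v m c1 c2)"
  proof (intro sum.cong refl)
    fix m c1 c2 assume m: "m \<in> {..<?t}" and c1: "c1 \<in> {..<2::nat}" and c2: "c2 \<in> {..<2::nat}"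
    have ml: "idx ! m < n" using lt m len by auto
    show "?M $$ (?r, m*4+(c1*2+c2)) * v $ (m*4+(c1*2+c2)) = rot (real (idx ! m * \<alpha>) * \<theta>) $$ (i,c1)
        * rot (real (idx ! m * kA * \<beta>) * \<theta>) $$ (j,c2) * Xv v m c1 c2"
      unfolding Xv_def using recovery_entry[OF al i be j _ _ _ ml len, of c1 c2 \<theta>] m c1 c2 len by simp
  qed
  also have "\<dots> = (\<Sum>m<?t. cmpt i j (cis (\<theta> * real (idx!m) * (real \<alpha> - real kA * real \<beta>)) * zc (Xv v m))
               (cis (\<theta> * real (idx!m) * (real \<alpha> + real kA * real \<beta>)) * wc (Xv v m)))"
  proof (intro sum.cong refl)
    fix m
    have e1: "real (idx ! m * \<alpha>) * \<theta> - real (idx ! m * kA * \<beta>) * \<theta> = \<theta> * real (idx!m) * (real \<alpha> - real kA * real \<beta>)"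
      by (simp add: algebra_simps)
    have e2: "real (idx ! m * \<alpha>) * \<theta> + real (idx ! m * kA * \<beta>) * \<theta> = \<theta> * real (idx!m) * (real \<alpha> + real kA * real \<beta>)"
      by (simp add: algebra_simps)
    show "(\<Sum>c1<2. \<Sum>c2<2. rot (real (idx ! m * \<alpha>) * \<theta>) $$ (i,c1)
        * rot (real (idx ! m * kA * \<beta>) * \<theta>) $$ (j,c2) * Xv v m c1 c2) =
        cmpt i j (cis (\<theta> * real (idx!m) * (real \<alpha> - real kA * real \<beta>)) * zc (Xv v m))
               (cis (\<theta> * real (idx!m) * (real \<alpha> + real kA * real \<beta>)) * wc (Xv v m))"
      unfolding term_id[OF i j] e1 e2 ..
  qed
  also have "\<dots> = cmpt i j (\<Sum>m<kA*kB. cis (\<theta> * real (idx!m) * (real \<alpha> - real kA * real \<beta>)) * zc (Xv v m))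
               (\<Sum>m<kA*kB. cis (\<theta> * real (idx!m) * (real \<alpha> + real kA * real \<beta>)) * wc (Xv v m))"
    by (rule comp_sum[symmetric])
  finally show ?thesis .
qed

lemma norm_identity:
  assumes len: "length idx = kA*kB" and lt: "\<forall>i\<in>set idx. i < n" and v: "v \<in> carrier_vec (4*kA*kB)"
  shows "(recovery_mat \<theta> kA kB n idx *\<^sub>v v) \<bullet> (recovery_mat \<theta> kA kB n idx *\<^sub>v v)
    = 2 * (\<Sum>\<alpha><kA. \<Sum>\<beta><kB.
        (cmod (\<Sum>m<kA*kB. cis (\<theta> * real (idx!m) * (real \<alpha> - real kA * real \<beta>)) * zc (Xv v m)))\<^sup>2
      + (cmod (\<Sum>m<kA*kB. cis (\<theta> * real (idx!m) * (real \<alpha> + real kA * real \<beta>)) * wc (Xv v m)))\<^sup>2)"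
proof -
  let ?M = "recovery_mat \<theta> kA kB n idx"
  let ?f = "\<lambda>r. ((?M *\<^sub>v v) $ r)\<^sup>2"
  let ?Z = "\<lambda>\<alpha> \<beta>. (\<Sum>m<kA*kB. cis (\<theta> * real (idx!m) * (real \<alpha> - real kA * real \<beta>)) * zc (Xv v m))"
  let ?W = "\<lambda>\<alpha> \<beta>. (\<Sum>m<kA*kB. cis (\<theta> * real (idx!m) * (real \<alpha> + real kA * real \<beta>)) * wc (Xv v m))"
  have "(?M *\<^sub>v v) \<bullet> (?M *\<^sub>v v) = (\<Sum>r<(kA*2)*(kB*2). ?f r)"
    by (simp add: scalar_prod_def lessThan_atLeast0 power2_eq_square mult.commute mult.left_commute)
  also have "\<dots> = (\<Sum>x<kA*2. \<Sum>y<kB*2. ?f (x*(kB*2)+y))" by (rule sum_split)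
  also have "\<dots> = (\<Sum>\<alpha><kA. \<Sum>i<2. \<Sum>\<beta><kB. \<Sum>j<2. ?f ((\<alpha>*2+i)*(kB*2)+(\<beta>*2+j)))"
    by (simp only: sum_split[of _ kA 2] sum_split[of _ kB 2])
  also have "\<dots> = (\<Sum>\<alpha><kA. \<Sum>\<beta><kB. \<Sum>i<2. \<Sum>j<2. ?f ((\<alpha>*2+i)*(kB*2)+(\<beta>*2+j)))"
    by (rule sum.cong[OF refl], rule sum.swap)
  also have "\<dots> = (\<Sum>\<alpha><kA. \<Sum>\<beta><kB. \<Sum>i<2. \<Sum>j<2. (cmpt i j (?Z \<alpha> \<beta>) (?W \<alpha> \<beta>))\<^sup>2)"
    by (intro sum.cong refl) (simp add: row_formula[OF len lt v])
  also have "\<dots> = (\<Sum>\<alpha><kA. \<Sum>\<beta><kB. 2 * ((cmod (?Z \<alpha> \<beta>))\<^sup>2 + (cmod (?W \<alpha> \<beta>))\<^sup>2))"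
    by (simp only: comp_sq)
  also have "\<dots> = 2 * (\<Sum>\<alpha><kA. \<Sum>\<beta><kB. (cmod (?Z \<alpha> \<beta>))\<^sup>2 + (cmod (?W \<alpha> \<beta>))\<^sup>2)"
    by (simp add: sum_distrib_left)
  finally show ?thesis .
qed

lemma vnorm_identity:
  assumes v: "v \<in> carrier_vec (4*t)"
  shows "v \<bullet> v = 2 * (\<Sum>m<t. (cmod (zc (Xv v m)))\<^sup>2 + (cmod (wc (Xv v m)))\<^sup>2)"
proof -
  have "v \<bullet> v = (\<Sum>c<t*4. (v $ c)\<^sup>2)"
    using v by (simp add: scalar_prod_def lessThan_atLeast0 power2_eq_square mult.commute)
  also have "\<dots> = (\<Sum>m<t. \<Sum>c'<4. (v $ (m*4+c'))\<^sup>2)" by (rule sum_split)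
  also have "\<dots> = (\<Sum>m<t. \<Sum>c1<2. \<Sum>c2<2. (Xv v m c1 c2)\<^sup>2)"
  proof (rule sum.cong[OF refl])
    fix m
    show "(\<Sum>c'<4. (v $ (m*4+c'))\<^sup>2) = (\<Sum>c1<2. \<Sum>c2<2. (Xv v m c1 c2)\<^sup>2)"
      using sum_split[of "\<lambda>c'. (v $ (m*4+c'))\<^sup>2" 2 2] unfolding Xv_def by simp
  qed
  also have "\<dots> = (\<Sum>m<t. 2 * ((cmod (zc (Xv v m)))\<^sup>2 + (cmod (wc (Xv v m)))\<^sup>2))"
    by (simp only: X_sq)
  also have "\<dots> = 2 * (\<Sum>m<t. (cmod (zc (Xv v m)))\<^sup>2 + (cmod (wc (Xv v m)))\<^sup>2)"
    by (simp add: sum_distrib_left)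
  finally show ?thesis .
qed


lemma reidx_plus:
  "(\<Sum>\<alpha><kA. \<Sum>\<beta><kB. g (real \<alpha> + real kA * real \<beta>)) = (\<Sum>k<kA*kB. g (real k))"
proof -
  have "(\<Sum>k<kB*kA. g (real k)) = (\<Sum>\<beta><kB. \<Sum>\<alpha><kA. g (real (\<beta>*kA+\<alpha>)))" by (rule sum_split)
  also have "\<dots> = (\<Sum>\<alpha><kA. \<Sum>\<beta><kB. g (real (\<beta>*kA+\<alpha>)))" by (rule sum.swap)
  also have "\<dots> = (\<Sum>\<alpha><kA. \<Sum>\<beta><kB. g (real \<alpha> + real kA * real \<beta>))"
    by (intro sum.cong refl) (simp add: algebra_simps)
  finally show ?thesis by (simp add: mult.commute)
qed

lemma reidx_minus:
  assumes "kB > 0"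
  shows "(\<Sum>\<alpha><kA. \<Sum>\<beta><kB. g (real \<alpha> - real kA * real \<beta>))
     = (\<Sum>k<kA*kB. g (- (real kA * (real kB - 1)) + real k))"
proof -
  have "(\<Sum>\<alpha><kA. \<Sum>\<beta><kB. g (real \<alpha> - real kA * real \<beta>))
      = (\<Sum>\<alpha><kA. \<Sum>\<beta><kB. g (real \<alpha> - real kA * real (kB - Suc \<beta>)))"
  proof (rule sum.cong[OF refl])
    fix \<alpha>
    show "(\<Sum>\<beta><kB. g (real \<alpha> - real kA * real \<beta>)) = (\<Sum>\<beta><kB. g (real \<alpha> - real kA * real (kB - Suc \<beta>)))"
      using sum.nat_diff_reindex[of "\<lambda>\<beta>. g (real \<alpha> - real kA * real \<beta>)" kB] by simp
  qed
  also have "\<dots> = (\<Sum>\<alpha><kA. \<Sum>\<beta><kB. g (- (real kA * (real kB - 1)) + (real \<alpha> + real kA * real \<beta>)))"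
  proof (intro sum.cong refl)
    fix \<alpha> \<beta> assume "\<beta> \<in> {..<kB}"
    then have "real (kB - Suc \<beta>) = real kB - 1 - real \<beta>" by (simp add: of_nat_diff)
    then show "g (real \<alpha> - real kA * real (kB - Suc \<beta>)) = g (- (real kA * (real kB - 1)) + (real \<alpha> + real kA * real \<beta>))"
      by (simp add: algebra_simps)
  qed
  also have "\<dots> = (\<Sum>k<kA*kB. g (- (real kA * (real kB - 1)) + real k))"
    by (rule reidx_plus[where g = "\<lambda>x. g (- (real kA * (real kB - 1)) + x)"])
  finally show ?thesis .
qed

lemma upper_one:
  fixes z :: "nat \<Rightarrow> complex"
  shows "(cmod (\<Sum>m<t. cis (f m) * z m))\<^sup>2 \<le> real t * (\<Sum>m<t. (cmod (z m))\<^sup>2)"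
proof -
  have "cmod (\<Sum>m<t. cis (f m) * z m) \<le> (\<Sum>m<t. cmod (z m))"
    using norm_sum[of "\<lambda>m. cis (f m) * z m" "{..<t}"] by (simp add: norm_mult)
  then have "(cmod (\<Sum>m<t. cis (f m) * z m))\<^sup>2 \<le> (\<Sum>m<t. cmod (z m))\<^sup>2"
    by (rule power_mono) simp
  also have "\<dots> \<le> real t * (\<Sum>m<t. (cmod (z m))\<^sup>2)" by (rule sum_sq_le)
  finally show ?thesis .
qed

lemma two_pow_le_fact: "(2::nat) ^ d \<le> 2 * fact d"
proof (induction d)
  case 0 then show ?case by simp
next
  case (Suc d)
  show ?case
  proof (cases d)
    case 0 then show ?thesis by simp
  next
    case (Suc d')
    have "(2::nat) ^ Suc d = 2 * 2 ^ d" by simp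
    also have "\<dots> \<le> 2 * (2 * fact d)" using Suc.IH by simp
    also have "\<dots> \<le> 2 * (Suc d * fact d)" using Suc by (intro mult_left_mono mult_right_mono) auto
    also have "\<dots> = 2 * fact (Suc d)" by (simp add: fact_Suc[of d])
    finally show ?thesis .
  qed
qed

lemma Aq_bound:
  assumes q: "q > 0" and t: "t \<le> q"
  shows "Aq q t * real q \<le> 2 * real q ^ (q - t)"
proof -
  let ?d = "q - t"
  have "((q - 1) choose ?d) * 2 ^ ?d \<le> ((q - 1) choose ?d) * (2 * fact ?d)"
    by (intro mult_left_mono two_pow_le_fact) simp
  also have "\<dots> = 2 * (((q - 1) choose ?d) * fact ?d)" by simp
  also have "\<dots> \<le> 2 * (q - 1) ^ ?d" using binomial_fact_pow by simp
  also have "\<dots> \<le> 2 * q ^ ?d" by (intro mult_left_mono power_mono) auto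
  finally have "real (((q - 1) choose ?d) * 2 ^ ?d) \<le> real (2 * q ^ ?d)" by (simp only: of_nat_le_iff)
  then show ?thesis unfolding Aq_def using q by simp
qed


theorem theorem4:
  "\<exists>C>0. \<forall>n q kA kB idx.
     odd q \<and> q \<ge> n \<and> 0 < kA \<and> 0 < kB \<and> kA * kB < n \<and>
     length idx = kA * kB \<and> distinct idx \<and> (\<forall>i\<in>set idx. i < n) \<longrightarrow>
       invertible_mat (recovery_mat (2 * pi / real q) kA kB n idx) \<and>
       cond_num (recovery_mat (2 * pi / real q) kA kB n idx)
         \<le> C * real q powr (real q - real (kA * kB) + 5.5)"
proof (intro exI[of _ 2] conjI allI impI)
  show "(0::real) < 2" by simp
  fix n q kA kB idx
  assume H: "odd q \<and> q \<ge> n \<and> 0 < kA \<and> 0 < kB \<and> kA * kB < n \<and>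
     length idx = kA * kB \<and> distinct idx \<and> (\<forall>i\<in>set idx. i < n)"
  then have qn: "q \<ge> n" and kA: "0 < kA" and kB: "0 < kB" and tn: "kA * kB < n"
    and len: "length idx = kA * kB" and d: "distinct idx" and lt: "\<forall>i\<in>set idx. i < n" by auto
  define t where "t = kA * kB"
  define \<theta> where "\<theta> = 2 * pi / real q"
  define M where "M = recovery_mat \<theta> kA kB n idx"
  have t0: "t > 0" unfolding t_def using kA kB by simp
  have tq: "t < q" unfolding t_def using tn qn by simp
  have q0: "q > 0" using tq by simp
  have ltq: "\<forall>i\<in>set idx. i < q" using lt qn by auto
  have lent: "length idx = t" unfolding t_def using len .
  have dim4: "4*kA*kB = 4*t" unfolding t_def by simp
  have Mc: "M \<in> carrier_mat (4*t) (4*t)"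
    unfolding M_def carrier_mat_def using len dim4 by (simp add: t_def)
  define A where "A = Aq q t"
  have A0: "A > 0"
  proof -
    have "q - t \<le> q - 1" using tq t0 by simp
    then have "(q - 1) choose (q - t) > 0" by simp
    then show ?thesis unfolding A_def Aq_def using q0 by simp
  qed
  define c where "c = 1 / (A * real t)"
  have c0: "c > 0" unfolding c_def using A0 t0 by simp
  have cA: "c\<^sup>2 * (A * real t)\<^sup>2 = 1" unfolding c_def using A0 t0 by (simp add: power_divide)
  define Zf where "Zf v x = (cmod (\<Sum>m<kA*kB. cis (\<theta> * real (idx!m) * x) * zc (Xv v m)))\<^sup>2" for v x
  define Wf where "Wf v x = (cmod (\<Sum>m<kA*kB. cis (\<theta> * real (idx!m) * x) * wc (Xv v m)))\<^sup>2" for v x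
  have NI: "(M *\<^sub>v v) \<bullet> (M *\<^sub>v v) = 2 * (\<Sum>\<alpha><kA. \<Sum>\<beta><kB.
        Zf v (real \<alpha> - real kA * real \<beta>) + Wf v (real \<alpha> + real kA * real \<beta>))"
    if v: "v \<in> carrier_vec (4*t)" for v
    unfolding M_def Zf_def Wf_def by (rule norm_identity[OF len lt]) (use v in \<open>simp only: dim4\<close>)
  have VI: "v \<bullet> v = 2 * (\<Sum>m<t. (cmod (zc (Xv v m)))\<^sup>2 + (cmod (wc (Xv v m)))\<^sup>2)"
    if v: "v \<in> carrier_vec (4*t)" for v
    by (rule vnorm_identity[OF v])
  have lo: "c\<^sup>2 * (v \<bullet> v) \<le> (M *\<^sub>v v) \<bullet> (M *\<^sub>v v)" if v: "v \<in> carrier_vec (4*t)" for v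
  proof -
    have Z: "(\<Sum>m<t. (cmod (zc (Xv v m)))\<^sup>2) \<le> (A * t)\<^sup>2 * (\<Sum>\<alpha><kA. \<Sum>\<beta><kB. Zf v (real \<alpha> - real kA * real \<beta>))"
    proof -
      have "(\<Sum>m<t. (cmod (zc (Xv v m)))\<^sup>2) \<le> (A * t)\<^sup>2 *
         (\<Sum>k<t. (cmod (\<Sum>m<t. cis (2 * pi / real q * real (idx ! m) * (- (real kA * (real kB - 1)) + real k)) * zc (Xv v m)))\<^sup>2)"
        unfolding A_def by (rule vander_cis[OF q0 d ltq lent t0])
      also have "(\<Sum>k<t. (cmod (\<Sum>m<t. cis (2 * pi / real q * real (idx ! m) * (- (real kA * (real kB - 1)) + real k)) * zc (Xv v m)))\<^sup>2)
          = (\<Sum>\<alpha><kA. \<Sum>\<beta><kB. Zf v (real \<alpha> - real kA * real \<beta>))"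
        unfolding Zf_def \<theta>_def t_def by (rule reidx_minus[OF kB, symmetric])
      finally show ?thesis .
    qed
    have W: "(\<Sum>m<t. (cmod (wc (Xv v m)))\<^sup>2) \<le> (A * t)\<^sup>2 * (\<Sum>\<alpha><kA. \<Sum>\<beta><kB. Wf v (real \<alpha> + real kA * real \<beta>))"
    proof -
      have "(\<Sum>m<t. (cmod (wc (Xv v m)))\<^sup>2) \<le> (A * t)\<^sup>2 *
         (\<Sum>k<t. (cmod (\<Sum>m<t. cis (2 * pi / real q * real (idx ! m) * (0 + real k)) * wc (Xv v m)))\<^sup>2)"
        unfolding A_def by (rule vander_cis[OF q0 d ltq lent t0])
      also have "(\<Sum>k<t. (cmod (\<Sum>m<t. cis (2 * pi / real q * real (idx ! m) * (0 + real k)) * wc (Xv v m)))\<^sup>2)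
          = (\<Sum>\<alpha><kA. \<Sum>\<beta><kB. Wf v (real \<alpha> + real kA * real \<beta>))"
        unfolding Wf_def \<theta>_def t_def using reidx_plus[of "\<lambda>x. (cmod (\<Sum>m<kA*kB. cis (2 * pi / real q * real (idx!m) * x) * wc (Xv v m)))\<^sup>2" kA kB]
        by simp
      finally show ?thesis .
    qed
    have "v \<bullet> v \<le> 2 * ((A * t)\<^sup>2 * (\<Sum>\<alpha><kA. \<Sum>\<beta><kB. Zf v (real \<alpha> - real kA * real \<beta>))
        + (A * t)\<^sup>2 * (\<Sum>\<alpha><kA. \<Sum>\<beta><kB. Wf v (real \<alpha> + real kA * real \<beta>)))"
      unfolding VI[OF v] sum.distrib using Z W by simp
    also have "\<dots> = (A * t)\<^sup>2 * ((M *\<^sub>v v) \<bullet> (M *\<^sub>v v))"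
      unfolding NI[OF v] by (simp add: sum.distrib algebra_simps)
    finally have "v \<bullet> v \<le> (A * t)\<^sup>2 * ((M *\<^sub>v v) \<bullet> (M *\<^sub>v v))" .
    then have "c\<^sup>2 * (v \<bullet> v) \<le> c\<^sup>2 * ((A * t)\<^sup>2 * ((M *\<^sub>v v) \<bullet> (M *\<^sub>v v)))"
      by (rule mult_left_mono) simp
    also have "\<dots> = (M *\<^sub>v v) \<bullet> (M *\<^sub>v v)" using cA by (simp add: mult.assoc[symmetric])
    finally show ?thesis .
  qed
  have hi: "(M *\<^sub>v v) \<bullet> (M *\<^sub>v v) \<le> (real t)\<^sup>2 * (v \<bullet> v)" if v: "v \<in> carrier_vec (4*t)" for v
  proof -
    have "(M *\<^sub>v v) \<bullet> (M *\<^sub>v v) \<le> 2 * (\<Sum>\<alpha><kA. \<Sum>\<beta><kB.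
        real t * (\<Sum>m<t. (cmod (zc (Xv v m)))\<^sup>2) + real t * (\<Sum>m<t. (cmod (wc (Xv v m)))\<^sup>2))"
      unfolding NI[OF v] Zf_def Wf_def t_def
      by (intro mult_left_mono sum_mono add_mono upper_one) simp_all
    also have "\<dots> = (real t)\<^sup>2 * (v \<bullet> v)"
      unfolding VI[OF v] by (simp add: t_def sum.distrib power2_eq_square algebra_simps)
    finally show ?thesis .
  qed
  have 4: "4 * t > 0" using t0 by simp
  have res: "invertible_mat M \<and> cond_num M \<le> real t / c"
    by (rule cond_bound[OF Mc 4 c0 _ lo hi]) simp_all
  have "real t / c = real t * A * real t" unfolding c_def using A0 t0 by simp
  also have "\<dots> \<le> real q * A * real q" using tq A0 by (intro mult_mono) auto
  also have "\<dots> = (A * real q) * real q" by simp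
  also have "\<dots> \<le> (2 * real q ^ (q - t)) * real q"
    unfolding A_def by (rule mult_right_mono[OF Aq_bound[OF q0]]) (use tq in auto)
  also have "\<dots> = 2 * real q ^ Suc (q - t)" by simp
  also have "\<dots> = 2 * real q powr real (Suc (q - t))" by (subst powr_realpow) (use q0 in auto)
  also have "\<dots> \<le> 2 * real q powr (real q - real (kA * kB) + 5.5)"
  proof -
    have "real (Suc (q - t)) \<le> real q - real (kA * kB) + 5.5" using tq unfolding t_def by (simp add: of_nat_diff)
    moreover have "1 \<le> real q" using q0 by simp
    ultimately show ?thesis by (simp add: powr_mono)
  qed
  finally show "invertible_mat (recovery_mat (2 * pi / real q) kA kB n idx)"
    and "cond_num (recovery_mat (2 * pi / real q) kA kB n idx) \<le> 2 * real q powr (real q - real (kA * kB) + 5.5)"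
    using res unfolding M_def \<theta>_def by simp_all
qed

end
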